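(* Let $l,p,r>1$ be integers, $n=lpr$, and $A\in\{0,1\}^{n\times n}$. Then $A$ admits both an $(l,pr)$ factorization and a $(pl,r)$ factorization if and only if $A$ admits an $(l,p,r)$ factorization.
   Context: Binary matrices have entries in $\{0,1\}$; Kronecker products use Boolean arithmetic ($1+1=1$). For positive integers $n_1,\dots,n_m$ with $\prod n_i=n$, an $(n_1,\dots,n_m)$ factorization of $A\in\{0,1\}^{n\times n}$ is an expression $A=A_1\otimes\cdots\otimes A_m$ with $A_i\in\{0,1\}^{n_i\times n_i}$. *)

theory Defs
  imports Main
begin

text \<open>Binary n x n matrices are represented as functions nat => nat => bool,
  only the entries with indices below n being relevant (True = 1, False = 0).\<close>

definition bkron :: "nat \<Rightarrow> (nat \<Rightarrow> nat \<Rightarrow> bool) \<Rightarrow> (nat \<Rightarrow> nat \<Rightarrow> bool) \<Rightarrow> (nat \<Rightarrow> nat \<Rightarrow> bool)" where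
  "bkron k A B = (\<lambda>i j. A (i div k) (j div k) \<and> B (i mod k) (j mod k))"

definition bmat_eq :: "nat \<Rightarrow> (nat \<Rightarrow> nat \<Rightarrow> bool) \<Rightarrow> (nat \<Rightarrow> nat \<Rightarrow> bool) \<Rightarrow> bool" where
  "bmat_eq n A B = (\<forall>i<n. \<forall>j<n. A i j = B i j)"

definition has_fact2 :: "nat \<Rightarrow> nat \<Rightarrow> (nat \<Rightarrow> nat \<Rightarrow> bool) \<Rightarrow> bool" where
  "has_fact2 n1 n2 A = (\<exists>A1 A2. bmat_eq (n1 * n2) A (bkron n2 A1 A2))"

definition has_fact3 :: "nat \<Rightarrow> nat \<Rightarrow> nat \<Rightarrow> (nat \<Rightarrow> nat \<Rightarrow> bool) \<Rightarrow> bool" where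
  "has_fact3 n1 n2 n3 A =
     (\<exists>A1 A2 A3. bmat_eq (n1 * n2 * n3) A (bkron (n2 * n3) A1 (bkron n3 A2 A3)))"

end

theory Submission
  imports Defs
begin
lemma idx_bound: "(a::nat) < l \<Longrightarrow> i < m \<Longrightarrow> a * m + i < l * m"
proof -
  assume "a < l" "i < m"
  then have "a * m + i < (a + 1) * m" by simp
  also have "... \<le> l * m" using \<open>a < l\<close> by (intro mult_right_mono) auto
  finally show ?thesis .
qed

lemma div_aux: "(r::nat) > 0 \<Longrightarrow> (a * (p * r) + i) div r = a * p + i div r"
proof -
  assume "r > 0"
  have "a * (p * r) + i = i + (a * p) * r" by (simp add: ac_simps)
  then show ?thesis using \<open>r > 0\<close> by (simp only:) simp
qed

lemma mod_aux: "(r::nat) > 0 \<Longrightarrow> (a * (p * r) + i) mod r = i mod r"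
proof -
  have "a * (p * r) + i = i + (a * p) * r" by (simp add: ac_simps)
  then show ?thesis by (simp only:) simp
qed

theorem lemma5:
  fixes l p r :: nat and A :: "nat \<Rightarrow> nat \<Rightarrow> bool"
  assumes "l > 1" and "p > 1" and "r > 1"
  shows "(has_fact2 l (p * r) A \<and> has_fact2 (p * l) r A) \<longleftrightarrow> has_fact3 l p r A"
proof
  assume H: "has_fact2 l (p * r) A \<and> has_fact2 (p * l) r A"
  then obtain B1 B2 where hB0: "bmat_eq (l * (p * r)) A (bkron (p * r) B1 B2)"
    unfolding has_fact2_def by blast
  from H obtain C1 C3 where hC0: "bmat_eq (p * l * r) A (bkron r C1 C3)"
    unfolding has_fact2_def by blast
  have hB: "\<And>i j. i < l * (p * r) \<Longrightarrow> j < l * (p * r) \<Longrightarrow>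
          A i j = (B1 (i div (p*r)) (j div (p*r)) \<and> B2 (i mod (p*r)) (j mod (p*r)))"
    using hB0 unfolding bmat_eq_def bkron_def by blast
  have hC: "\<And>i j. i < p * l * r \<Longrightarrow> j < p * l * r \<Longrightarrow>
          A i j = (C1 (i div r) (j div r) \<and> C3 (i mod r) (j mod r))"
    using hC0 unfolding bmat_eq_def bkron_def by blast
  have pr: "p * r > 0" "r > 0" using assms by auto
  show "has_fact3 l p r A"
  proof (cases "\<exists>a<l. \<exists>b<l. B1 a b")
    case True
    then obtain a b where ab: "a < l" "b < l" "B1 a b" by blast
    define D where "D = (\<lambda>u v. C1 (a*p+u) (b*p+v))"
    have key: "B2 i' j' = (D (i' div r) (j' div r) \<and> C3 (i' mod r) (j' mod r))"
      if "i' < p*r" "j' < p*r" for i' j'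
    proof -
      let ?I = "a * (p*r) + i'" and ?J = "b * (p*r) + j'"
      have I: "?I < l * (p*r)" "?J < l * (p*r)" using idx_bound ab that by auto
      have "A ?I ?J = (B1 a b \<and> B2 i' j')" using hB[OF I] that pr by simp
      moreover have "A ?I ?J = (C1 (?I div r) (?J div r) \<and> C3 (?I mod r) (?J mod r))"
        using hC I by (simp add: mult.commute mult.left_commute)
      ultimately show ?thesis using ab div_aux[OF pr(2)] mod_aux[OF pr(2)] by (simp add: D_def)
    qed
    show ?thesis unfolding has_fact3_def bmat_eq_def
    proof (intro exI allI impI)
      fix i j assume ij: "i < l * p * r" "j < l * p * r"
      then have ij': "i < l * (p*r)" "j < l * (p*r)" by (simp_all add: mult.assoc)
      show "A i j = bkron (p * r) B1 (bkron r D C3) i j"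
        using hB[OF ij'] key[of "i mod (p*r)" "j mod (p*r)"] pr by (simp add: bkron_def)
    qed
  next
    case False
    show ?thesis unfolding has_fact3_def bmat_eq_def
    proof (rule exI[of _ B1], rule exI[of _ B2], rule exI[of _ B2], intro allI impI)
      fix i j assume ij: "i < l * p * r" "j < l * p * r"
      then have ij': "i < l * (p*r)" "j < l * (p*r)" by (simp_all add: mult.assoc)
      have "i div (p*r) < l" "j div (p*r) < l" using ij' by (simp_all add: less_mult_imp_div_less)
      then have "\<not> B1 (i div (p*r)) (j div (p*r))" using False by blast
      then show "A i j = bkron (p * r) B1 (bkron r B2 B2) i j"
        using hB[OF ij'] by (simp add: bkron_def)
    qed
  qed
next
  assume "has_fact3 l p r A"
  then obtain A1 A2 A3 where h0: "bmat_eq (l * p * r) A (bkron (p * r) A1 (bkron r A2 A3))"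
    unfolding has_fact3_def by blast
  have h: "\<And>i j. i < l * p * r \<Longrightarrow> j < l * p * r \<Longrightarrow>
      A i j = (A1 (i div (p*r)) (j div (p*r)) \<and> A2 (i mod (p*r) div r) (j mod (p*r) div r)
               \<and> A3 (i mod (p*r) mod r) (j mod (p*r) mod r))"
    using h0 unfolding bmat_eq_def bkron_def by blast
  have r0: "r > 0" using assms by auto
  have m1: "(i mod (p*r)) mod r = i mod r" for i :: nat
    by (rule mod_mod_cancel) simp
  have d1: "i div (p*r) = (i div r) div p" for i :: nat
    by (simp add: div_mult2_eq mult.commute[of p r])
  have d2: "(i mod (p*r)) div r = (i div r) mod p" for i :: nat
    using r0 by (simp add: mult.commute[of p r] mod_mult2_eq)
  have "has_fact2 l (p * r) A"
    unfolding has_fact2_def bmat_eq_def bkron_def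
  proof (rule exI[of _ A1], rule exI[of _ "\<lambda>u v. A2 (u div r) (v div r) \<and> A3 (u mod r) (v mod r)"], intro allI impI)
    fix i j assume "i < l * (p * r)" "j < l * (p * r)"
    then have ij: "i < l * p * r" "j < l * p * r" by (simp_all add: mult.assoc)
    show "A i j = (A1 (i div (p * r)) (j div (p * r)) \<and>
            A2 (i mod (p * r) div r) (j mod (p * r) div r) \<and> A3 (i mod (p * r) mod r) (j mod (p * r) mod r))"
      using h[OF ij] by simp
  qed
  moreover have "has_fact2 (p * l) r A"
    unfolding has_fact2_def bmat_eq_def bkron_def
  proof (rule exI[of _ "\<lambda>u v. A1 (u div p) (v div p) \<and> A2 (u mod p) (v mod p)"], rule exI[of _ A3], intro allI impI)
    fix i j assume "i < p * l * r" "j < p * l * r"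
    then have ij: "i < l * p * r" "j < l * p * r" by (simp_all only: mult.commute[of p l])
    show "A i j = ((A1 (i div r div p) (j div r div p) \<and> A2 (i div r mod p) (j div r mod p)) \<and>
            A3 (i mod r) (j mod r))"
      using h[OF ij] by (simp only: m1 d1 d2 conj_assoc)
  qed
  ultimately show "has_fact2 l (p * r) A \<and> has_fact2 (p * l) r A" by blast
qed

end
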